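(* Let $G=(V,E)$ be a graph with nonnegative edge lengths $l_e$, root $r$, and integer demands $d_v>0$ on a set of demand nodes, with total demand $D$. Fix $\epsilon>0$, $\gamma>1$, $\delta>1$, let $K=\lceil \log_{1+\epsilon} D\rceil$, $M_i=(1+\epsilon)^i$, $A_i(x)=\min\{x,M_i\}$, and let $T_i^*$ be an optimal routing tree for $A_i$ with rent cost $R_i^*$ and normalized buy cost $B_i^*$ ($0\le i\le K$). Run the following procedure: (1) for each $i$ let $T_i$ be a routing tree returned by an SSRoB approximation algorithm for cost function $A_i$; (2) for $i=1,\dots,K$ in increasing order, if $A_i(T_{i-1})<A_i(T_i)$ set $T_i\leftarrow T_{i-1}$; (3) for $i=K-1,\dots,0$ in decreasing order, if $A_i(T_{i+1})<A_i(T_i)$ set $T_i\leftarrow T_{i+1}$; (4) compute the rent cost $R_i$ and normalized buy cost $B_i$ of each resulting $T_i$; (5) set $L_B=\emptyset$, $B=\infty$, and for $i=0,\dots,K$ in increasing order, if $B_i<B/\gamma$ then add $i$ to $L_B$ and set $B\leftarrow B_i$; (6) set $L=\emptyset$, $R=\infty$, and for each $i\in L_B$ in decreasing order, if $R_i<R/\delta$ then add $i$ to $L$ and set $R\leftarrow R_i$. Suppose there exist a routing tree $T$ and constants $c_B,c_R$ such that for every $i\in L$ there is a partition of the edges of $T$ into two sets $T_{B_i}$ and $T_{R_i}$ with $A_0(T_{B_i})\le c_B B_i$ and $A_K(T_{R_i})\le c_R R_i$, and suppose that for all $i$, $R_i\le \mu_R R_i^*+\mu_B M_iB_i^*$ and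 $M_iB_i\le \nu_R R_i^*+\nu_B M_iB_i^*$. Then for all $k\in\{0,\dots,K\}$, $A_k(T)\le \max\{c_R\delta\mu_R+c_B\gamma\nu_R,\; c_R\delta\mu_B+c_B\gamma\nu_B\}\,A_k(T_k^* )$.
   Context: A routing tree is a tree in $G$ containing $r$ and all demand nodes; each demand node $v$ sends $d_v$ units of flow to $r$ along its unique tree path, and $x_e$ denotes the total flow on edge $e$. For a function $f$ and a routing tree $T$, $f(T)=\sum_{e\in T} l_e f(x_e)$; for a subset $S$ of edges of $T$, $f(S)=\sum_{e\in S} l_e f(x_e)$ with $x_e$ the flows in $T$. The single-sink rent-or-buy (SSRoB) problem with parameter $M$ is to find a routing tree minimizing $A(T)$ for $A(x)=\min\{x,M\}$. For a routing tree $T_i$ with flows $x_e$, its rent cost is $R_i=\sum_{e\in T_i,\,x_e<M_i} l_e A_i(x_e)$ and its normalized buy cost is $B_i=\sum_{e\in T_i,\,x_e\ge M_i} l_e$. *)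

theory Defs
  imports Complex_Main
begin

text \<open>Graphs: vertices of type 'a, edges are 2-element vertex sets.
  A subgraph (in particular a routing tree) is given by its edge set T.\<close>

definition walk_edges :: "'a list \<Rightarrow> 'a set set" where
  "walk_edges ps = {{ps ! j, ps ! Suc j} | j. Suc j < length ps}"

definition is_path :: "'a set set \<Rightarrow> 'a \<Rightarrow> 'a \<Rightarrow> 'a list \<Rightarrow> bool" where
  "is_path T u v ps \<longleftrightarrow> ps \<noteq> [] \<and> hd ps = u \<and> last ps = v \<and> distinct ps \<and> walk_edges ps \<subseteq> T"

definition has_cycle :: "'a set set \<Rightarrow> bool" where
  "has_cycle T \<longleftrightarrow> (\<exists>ps. 3 \<le> length ps \<and> distinct ps \<and> walk_edges ps \<subseteq> T \<and> {last ps, hd ps} \<in> T)"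

definition tverts :: "'a \<Rightarrow> 'a set set \<Rightarrow> 'a set" where
  "tverts r T = insert r (\<Union>T)"

definition is_tree :: "'a \<Rightarrow> 'a set set \<Rightarrow> bool" where
  "is_tree r T \<longleftrightarrow> finite T \<and>
     (\<forall>u\<in>tverts r T. \<forall>v\<in>tverts r T. \<exists>ps. is_path T u v ps) \<and> \<not> has_cycle T"

definition routing_tree :: "'a set set \<Rightarrow> 'a \<Rightarrow> 'a set \<Rightarrow> 'a set set \<Rightarrow> bool" where
  "routing_tree E r Dem T \<longleftrightarrow> T \<subseteq> E \<and> is_tree r T \<and> Dem \<subseteq> tverts r T"

definition flow :: "'a set \<Rightarrow> ('a \<Rightarrow> nat) \<Rightarrow> 'a \<Rightarrow> 'a set set \<Rightarrow> 'a set \<Rightarrow> real" where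
  "flow Dem d r T e =
     (\<Sum>v\<in>Dem. if (\<exists>ps. is_path T v r ps \<and> e \<in> walk_edges ps) then real (d v) else 0)"

definition Acost :: "real \<Rightarrow> real \<Rightarrow> real" where
  "Acost M x = min x M"

text \<open>f(T) and f(S) for S a subset of the edges of T.\<close>
definition scost :: "'a set \<Rightarrow> ('a \<Rightarrow> nat) \<Rightarrow> 'a \<Rightarrow> ('a set \<Rightarrow> real) \<Rightarrow> (real \<Rightarrow> real)
    \<Rightarrow> 'a set set \<Rightarrow> 'a set set \<Rightarrow> real" where
  "scost Dem d r l f T S = (\<Sum>e\<in>S. l e * f (flow Dem d r T e))"

definition tcost :: "'a set \<Rightarrow> ('a \<Rightarrow> nat) \<Rightarrow> 'a \<Rightarrow> ('a set \<Rightarrow> real) \<Rightarrow> (real \<Rightarrow> real)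
    \<Rightarrow> 'a set set \<Rightarrow> real" where
  "tcost Dem d r l f T = scost Dem d r l f T T"

definition rent :: "'a set \<Rightarrow> ('a \<Rightarrow> nat) \<Rightarrow> 'a \<Rightarrow> ('a set \<Rightarrow> real) \<Rightarrow> real \<Rightarrow> 'a set set \<Rightarrow> real" where
  "rent Dem d r l M T = (\<Sum>e\<in>{e\<in>T. flow Dem d r T e < M}. l e * Acost M (flow Dem d r T e))"

definition buy :: "'a set \<Rightarrow> ('a \<Rightarrow> nat) \<Rightarrow> 'a \<Rightarrow> ('a set \<Rightarrow> real) \<Rightarrow> real \<Rightarrow> 'a set set \<Rightarrow> real" where
  "buy Dem d r l M T = (\<Sum>e\<in>{e\<in>T. M \<le> flow Dem d r T e}. l e)"

text \<open>Step 2: forward pass; c i T is A_i(T).\<close>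
fun fwd :: "(nat \<Rightarrow> 'b \<Rightarrow> real) \<Rightarrow> (nat \<Rightarrow> 'b) \<Rightarrow> nat \<Rightarrow> 'b" where
  "fwd c T0 0 = T0 0"
| "fwd c T0 (Suc i) =
     (if c (Suc i) (fwd c T0 i) < c (Suc i) (T0 (Suc i)) then fwd c T0 i else T0 (Suc i))"

text \<open>Step 3: backward pass; bwd c F K j is the final tree of index K - j.\<close>
fun bwd :: "(nat \<Rightarrow> 'b \<Rightarrow> real) \<Rightarrow> (nat \<Rightarrow> 'b) \<Rightarrow> nat \<Rightarrow> nat \<Rightarrow> 'b" where
  "bwd c F K 0 = F K"
| "bwd c F K (Suc j) =
     (let i = K - Suc j in if c i (bwd c F K j) < c i (F i) then bwd c F K j else F i)"

definition final_trees :: "(nat \<Rightarrow> 'b \<Rightarrow> real) \<Rightarrow> (nat \<Rightarrow> 'b) \<Rightarrow> nat \<Rightarrow> nat \<Rightarrow> 'b" where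
  "final_trees c T0 K i = bwd c (fwd c T0) K (K - i)"

text \<open>Step 5: threshold None represents \<infinity>; after n steps indices 0..n-1 processed.\<close>
fun lb_scan :: "(nat \<Rightarrow> real) \<Rightarrow> real \<Rightarrow> nat \<Rightarrow> nat set \<times> real option" where
  "lb_scan Bv g 0 = ({}, None)"
| "lb_scan Bv g (Suc n) =
     (case lb_scan Bv g n of (S, b) \<Rightarrow>
        if (case b of None \<Rightarrow> True | Some bb \<Rightarrow> Bv n < bb / g)
        then (insert n S, Some (Bv n)) else (S, b))"

definition LB_set :: "(nat \<Rightarrow> real) \<Rightarrow> real \<Rightarrow> nat \<Rightarrow> nat set" where
  "LB_set Bv g K = fst (lb_scan Bv g (Suc K))"

text \<open>Step 6: indices K, K-1, ..., 0 processed in this order, only those in LB.\<close>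
fun l_scan :: "nat set \<Rightarrow> (nat \<Rightarrow> real) \<Rightarrow> real \<Rightarrow> nat \<Rightarrow> nat \<Rightarrow> nat set \<times> real option" where
  "l_scan LB Rv dl K 0 = ({}, None)"
| "l_scan LB Rv dl K (Suc j) =
     (case l_scan LB Rv dl K j of (S, b) \<Rightarrow>
        if K - j \<in> LB \<and> (case b of None \<Rightarrow> True | Some bb \<Rightarrow> Rv (K - j) < bb / dl)
        then (insert (K - j) S, Some (Rv (K - j))) else (S, b))"

definition L_set :: "nat set \<Rightarrow> (nat \<Rightarrow> real) \<Rightarrow> real \<Rightarrow> nat \<Rightarrow> nat set" where
  "L_set LB Rv dl K = fst (l_scan LB Rv dl K (Suc K))"

definition Kof :: "'a set \<Rightarrow> ('a \<Rightarrow> nat) \<Rightarrow> real \<Rightarrow> nat" where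
  "Kof Dem d eps = nat \<lceil>log (1 + eps) (real (\<Sum>v\<in>Dem. d v))\<rceil>"

definition Mof :: "real \<Rightarrow> nat \<Rightarrow> real" where
  "Mof eps i = (1 + eps) ^ i"

definition costA :: "'a set \<Rightarrow> ('a \<Rightarrow> nat) \<Rightarrow> 'a \<Rightarrow> ('a set \<Rightarrow> real) \<Rightarrow> real
    \<Rightarrow> nat \<Rightarrow> 'a set set \<Rightarrow> real" where
  "costA Dem d r l eps i S = tcost Dem d r l (Acost (Mof eps i)) S"

text \<open>Trees T_i after steps (1)-(3), given the algorithm outputs T0.\<close>
definition proc_trees :: "'a set \<Rightarrow> ('a \<Rightarrow> nat) \<Rightarrow> 'a \<Rightarrow> ('a set \<Rightarrow> real) \<Rightarrow> real
    \<Rightarrow> (nat \<Rightarrow> 'a set set) \<Rightarrow> nat \<Rightarrow> 'a set set" where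
  "proc_trees Dem d r l eps T0 = final_trees (costA Dem d r l eps) T0 (Kof Dem d eps)"

end

theory Submission imports Defs begin

definition fA :: "('e \<Rightarrow> real) \<Rightarrow> ('e \<Rightarrow> real) \<Rightarrow> real \<Rightarrow> 'e set \<Rightarrow> real" where
  "fA l x M S = (\<Sum>e\<in>S. l e * min (x e) M)"
definition rA :: "('e \<Rightarrow> real) \<Rightarrow> ('e \<Rightarrow> real) \<Rightarrow> real \<Rightarrow> 'e set \<Rightarrow> real" where
  "rA l x M S = (\<Sum>e\<in>{e\<in>S. x e < M}. l e * min (x e) M)"
definition bA :: "('e \<Rightarrow> real) \<Rightarrow> ('e \<Rightarrow> real) \<Rightarrow> real \<Rightarrow> 'e set \<Rightarrow> real" where
  "bA l x M S = (\<Sum>e\<in>{e\<in>S. M \<le> x e}. l e)"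

lemma rA_alt: "finite S \<Longrightarrow> rA l x M S = (\<Sum>e\<in>S. if x e < M then l e * min (x e) M else 0)"
  unfolding rA_def by (rule sum.inter_filter)
lemma bA_alt: "finite S \<Longrightarrow> M * bA l x M S = (\<Sum>e\<in>S. if M \<le> x e then M * l e else 0)"
  unfolding bA_def by (auto simp: sum.inter_filter sum_distrib_left intro!: sum.cong)

lemma F1: "finite S \<Longrightarrow> fA l x M S = rA l x M S + M * bA l x M S"
  unfolding fA_def rA_alt bA_alt sum.distrib[symmetric]
  by (rule sum.cong) (auto simp: min_def)

lemma F2: assumes "finite S" "\<forall>e\<in>S. 0 \<le> l e"
  shows "fA l x M' S \<le> rA l x M S + M' * bA l x M S"
  unfolding fA_def rA_alt[OF assms(1)] bA_def sum.inter_filter[OF assms(1)] sum_distrib_left sum.distrib[symmetric]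
proof (rule sum_mono)
  fix e assume "e \<in> S" hence l: "0 \<le> l e" using assms by auto
  show "l e * min (x e) M' \<le> (if x e < M then l e * min (x e) M else 0) + M' * (if M \<le> x e then l e else 0)"
  proof (cases "x e < M")
    case True
    have "min (x e) M' \<le> min (x e) M" using True by auto
    hence "l e * min (x e) M' \<le> l e * min (x e) M" using l by (rule mult_left_mono)
    thus ?thesis using True by simp
  next
    case False
    have "min (x e) M' \<le> M'" by auto
    hence "l e * min (x e) M' \<le> l e * M'" using l by (rule mult_left_mono)
    thus ?thesis using False by (simp add: mult.commute)
  qed
qed

lemma F3: assumes "finite S" "\<forall>e\<in>S. 0 \<le> l e" "M1 \<le> M2"
  shows "(M2 - M1) * bA l x M2 S \<le> fA l x M2 S - fA l x M1 S"
  unfolding fA_def bA_def sum_subtractf[symmetric] sum_distrib_left sum.inter_filter[OF assms(1)]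
proof (rule sum_mono)
  fix e assume "e \<in> S" hence l: "0 \<le> l e" using assms by auto
  show "(M2 - M1) * (if M2 \<le> x e then l e else 0) \<le> l e * min (x e) M2 - l e * min (x e) M1"
  proof (cases "M2 \<le> x e")
    case True thus ?thesis using assms(3) by (simp add: min_def algebra_simps)
  next
    case False
    have "min (x e) M1 \<le> min (x e) M2" using assms(3) by auto
    hence "l e * min (x e) M1 \<le> l e * min (x e) M2" using l by (rule mult_left_mono)
    thus ?thesis using False by simp
  qed
qed

lemma F4: assumes "finite S" "\<forall>e\<in>S. 0 \<le> l e" "M1 \<le> M2"
  shows "fA l x M2 S - fA l x M1 S \<le> (M2 - M1) * bA l x M1 S"
  unfolding fA_def bA_def sum_subtractf[symmetric] sum_distrib_left sum.inter_filter[OF assms(1)]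
proof (rule sum_mono)
  fix e assume "e \<in> S" hence l: "0 \<le> l e" using assms by auto
  show "l e * min (x e) M2 - l e * min (x e) M1 \<le> (M2 - M1) * (if M1 \<le> x e then l e else 0)"
  proof (cases "M1 \<le> x e")
    case True
    have "min (x e) M2 - M1 \<le> M2 - M1" by auto
    hence "l e * (min (x e) M2 - M1) \<le> l e * (M2 - M1)" using l by (rule mult_left_mono)
    moreover have "l e * min (x e) M2 - l e * min (x e) M1 = l e * (min (x e) M2 - M1)"
      using True by (simp add: algebra_simps)
    ultimately show ?thesis using True by (simp add: mult.commute)
  next
    case False thus ?thesis using assms(3) by (simp add: min_def)
  qed
qed

lemma exch:
  assumes "finite S1" "finite S2" "\<forall>e\<in>S1. 0 \<le> l e" "\<forall>e\<in>S2. 0 \<le> l e" "0 \<le> M1" "M1 < M2"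
    "fA l x1 M1 S1 \<le> fA l x2 M1 S2" "fA l x2 M2 S2 \<le> fA l x1 M2 S1"
  shows "bA l x2 M2 S2 \<le> bA l x1 M1 S1 \<and> rA l x1 M1 S1 \<le> rA l x2 M2 S2"
proof -
  have "(M2 - M1) * bA l x2 M2 S2 \<le> fA l x2 M2 S2 - fA l x2 M1 S2"
    using F3[OF assms(2,4)] assms(6) by auto
  also have "\<dots> \<le> fA l x1 M2 S1 - fA l x1 M1 S1" using assms(7,8) by auto
  also have "\<dots> \<le> (M2 - M1) * bA l x1 M1 S1" using F4[OF assms(1,3)] assms(6) by auto
  finally have b: "bA l x2 M2 S2 \<le> bA l x1 M1 S1" using assms(6) by auto
  have "rA l x1 M1 S1 = fA l x1 M1 S1 - M1 * bA l x1 M1 S1" using F1[OF assms(1)] by auto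
  also have "\<dots> \<le> fA l x2 M1 S2 - M1 * bA l x1 M1 S1" using assms(7) by auto
  also have "\<dots> \<le> rA l x2 M2 S2 + M1 * bA l x2 M2 S2 - M1 * bA l x1 M1 S1"
    using F2[OF assms(2,4), of x2 M1 M2] by auto
  also have "\<dots> \<le> rA l x2 M2 S2" using mult_left_mono[OF b assms(5)] by auto
  finally show ?thesis using b by auto
qed

lemma rA_nonneg: "\<forall>e\<in>S. 0 \<le> l e \<Longrightarrow> \<forall>e\<in>S. 0 \<le> x e \<Longrightarrow> 0 \<le> M \<Longrightarrow> 0 \<le> rA l x M S"
  unfolding rA_def by (intro sum_nonneg) auto
lemma bA_nonneg: "\<forall>e\<in>S. 0 \<le> l e \<Longrightarrow> 0 \<le> bA l x M S"
  unfolding bA_def by (intro sum_nonneg) auto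

lemma lb_inv: "(snd (lb_scan Bv g n) = None \<and> fst (lb_scan Bv g n) = {}) \<or>
   (\<exists>j\<in>fst (lb_scan Bv g n). snd (lb_scan Bv g n) = Some (Bv j))"
  by (induction n) (auto split: prod.splits option.splits)

lemma lb_sub: "fst (lb_scan Bv g n) \<subseteq> {..<n}"
  by (induction n) (auto split: prod.splits option.splits)

lemma lb_main: "0 < g \<Longrightarrow> k < n \<Longrightarrow> \<exists>j\<in>fst (lb_scan Bv g n). j \<le> k \<and> (j = k \<or> Bv j \<le> g * Bv k)"
proof (induction n)
  case 0 thus ?case by simp
next
  case (Suc n)
  obtain S b where Sb: "lb_scan Bv g n = (S,b)" by (cases "lb_scan Bv g n")
  show ?case
  proof (cases "k < n")
    case True
    from Suc.IH[OF Suc.prems(1) True] Sb obtain j where "j \<in> S" "j \<le> k \<and> (j=k \<or> Bv j \<le> g * Bv k)" by auto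
    moreover have "S \<subseteq> fst (lb_scan Bv g (Suc n))" using Sb by auto
    ultimately show ?thesis by blast
  next
    case False hence kn: "k = n" using Suc.prems by simp
    show ?thesis
    proof (cases "case b of None \<Rightarrow> True | Some bb \<Rightarrow> Bv n < bb / g")
      case True
      hence "n \<in> fst (lb_scan Bv g (Suc n))" using Sb by simp
      moreover have "n \<le> k \<and> (n = k \<or> Bv n \<le> g * Bv k)" using kn by simp
      ultimately show ?thesis by blast
    next
      case False
      then obtain bb where b: "b = Some bb" "\<not> Bv n < bb/g" by (cases b) auto
      from lb_inv[of Bv g n] Sb b obtain j where j: "j\<in>S" "bb = Bv j" by auto
      with lb_sub[of Bv g n] Sb have "j < n" by auto
      have "Bv j \<le> g * Bv n" using b(2) j(2) Suc.prems(1) by (simp add: field_simps not_less)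
      moreover have "S \<subseteq> fst (lb_scan Bv g (Suc n))" using Sb by auto
      ultimately have "j \<in> fst (lb_scan Bv g (Suc n))" using j by blast
      moreover have "j \<le> k" using \<open>j < n\<close> kn by simp
      ultimately show ?thesis using \<open>Bv j \<le> g * Bv n\<close> kn by blast
    qed
  qed
qed

lemma l_inv: "(snd (l_scan LB Rv dl K m) = None \<and> fst (l_scan LB Rv dl K m) = {}) \<or>
   (\<exists>i\<in>fst (l_scan LB Rv dl K m). snd (l_scan LB Rv dl K m) = Some (Rv i))"
  by (induction m) (auto split: prod.splits option.splits)

lemma l_sub: "\<forall>i\<in>fst (l_scan LB Rv dl K m). \<exists>j<m. i = K - j"
proof (induction m)
  case 0 thus ?case by simp
next
  case (Suc m)
  obtain S b where Sb: "l_scan LB Rv dl K m = (S,b)" by (cases "l_scan LB Rv dl K m")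
  have "fst (l_scan LB Rv dl K (Suc m)) \<subseteq> insert (K - m) S" using Sb by auto
  moreover have "\<forall>i\<in>S. \<exists>j<Suc m. i = K - j" using Suc.IH Sb by (auto intro: less_SucI)
  ultimately show ?case by blast
qed

lemma l_main: "0 < dl \<Longrightarrow> j \<in> LB \<Longrightarrow> j \<le> K \<Longrightarrow> K - j < m \<Longrightarrow>
   \<exists>i\<in>fst (l_scan LB Rv dl K m). j \<le> i \<and> i \<le> K \<and> (i = j \<or> Rv i \<le> dl * Rv j)"
proof (induction m)
  case 0 thus ?case by simp
next
  case (Suc m)
  obtain S b where Sb: "l_scan LB Rv dl K m = (S,b)" by (cases "l_scan LB Rv dl K m")
  show ?case
  proof (cases "K - j < m")
    case True
    from Suc.IH[OF Suc.prems(1-3) True] Sb obtain i where "i \<in> S" "j \<le> i \<and> i \<le> K \<and> (i = j \<or> Rv i \<le> dl * Rv j)" by auto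
    moreover have "S \<subseteq> fst (l_scan LB Rv dl K (Suc m))" using Sb by auto
    ultimately show ?thesis by blast
  next
    case False hence kn: "j = K - m" "m \<le> K" using Suc.prems by auto
    show ?thesis
    proof (cases "case b of None \<Rightarrow> True | Some bb \<Rightarrow> Rv (K - m) < bb / dl")
      case True
      hence "j \<in> fst (l_scan LB Rv dl K (Suc m))" using Sb kn Suc.prems(2) by simp
      moreover have "j \<le> j \<and> j \<le> K \<and> (j = j \<or> Rv j \<le> dl * Rv j)" using Suc.prems(3) by simp
      ultimately show ?thesis by blast
    next
      case False
      then obtain bb where b: "b = Some bb" "\<not> Rv (K - m) < bb/dl" by (cases b) auto
      from l_inv[of LB Rv dl K m] Sb b obtain i where i: "i\<in>S" "bb = Rv i" by auto
      have "\<exists>j'<m. i = K - j'" using l_sub[of LB Rv dl K m] Sb i(1) by simp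
      then obtain j' where j': "j' < m" "i = K - j'" by blast
      have ij: "j \<le> i" "i \<le> K" using j' kn(1) by (simp_all add: diff_le_mono2)
      have "Rv i \<le> dl * Rv j" using b(2) i(2) Suc.prems(1) kn by (simp add: field_simps not_less)
      moreover have "S \<subseteq> fst (l_scan LB Rv dl K (Suc m))" using Sb by auto
      ultimately have "i \<in> fst (l_scan LB Rv dl K (Suc m))" "j \<le> i \<and> i \<le> K \<and> (i = j \<or> Rv i \<le> dl * Rv j)" using i ij by blast+
      then show ?thesis by blast
    qed
  qed
qed

lemma fwd_step: "c (Suc i) (fwd c T0 (Suc i)) \<le> c (Suc i) (fwd c T0 i)"
  by simp

lemma bwd_le_F: "c (K - j) (bwd c F K j) \<le> c (K - j) (F (K - j))"
  by (induction j) (auto simp: Let_def)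

lemma bwd_pair1: "c (K - Suc j) (bwd c F K (Suc j)) \<le> c (K - Suc j) (bwd c F K j)"
  by (auto simp: Let_def)

lemma bwd_pair2: assumes "j < K" "\<And>i. c (Suc i) (F (Suc i)) \<le> c (Suc i) (F i)"
  shows "c (K - j) (bwd c F K j) \<le> c (K - j) (bwd c F K (Suc j))"
proof (cases "c (K - Suc j) (bwd c F K j) < c (K - Suc j) (F (K - Suc j))")
  case True thus ?thesis by (simp add: Let_def)
next
  case False
  hence e: "bwd c F K (Suc j) = F (K - Suc j)" by (simp add: Let_def)
  have s: "K - j = Suc (K - Suc j)" using assms(1) by auto
  have "c (K - j) (bwd c F K j) \<le> c (K - j) (F (K - j))" by (rule bwd_le_F)
  also have "\<dots> \<le> c (K - j) (F (K - Suc j))" unfolding s by (rule assms(2))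
  finally show ?thesis using e by simp
qed

lemma final_pair: assumes "i < K"
  shows "c i (final_trees c T0 K i) \<le> c i (final_trees c T0 K (Suc i)) \<and>
         c (Suc i) (final_trees c T0 K (Suc i)) \<le> c (Suc i) (final_trees c T0 K i)"
proof -
  define j where "j = K - Suc i"
  have a: "K - i = Suc j" "K - Suc i = j" "K - j = Suc i" "K - Suc j = i" "j < K" using assms unfolding j_def by auto
  show ?thesis unfolding final_trees_def a(1,2)
    using bwd_pair1[of c K j "fwd c T0"] bwd_pair2[OF a(5), of c "fwd c T0"] fwd_step[of c] a(3,4)
    by auto
qed

lemma fwd_in: "fwd c T0 i \<in> T0 ` {..i}"
  by (induction i) auto
lemma bwd_in: "(\<forall>m\<le>K. F m \<in> A) \<Longrightarrow> bwd c F K j \<in> A"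
  by (induction j) (auto simp: Let_def)
lemma final_in: "final_trees c T0 K i \<in> T0 ` {..K}"
  unfolding final_trees_def
proof (rule bwd_in, intro allI impI)
  fix m assume "m \<le> K"
  hence "T0 ` {..m} \<subseteq> T0 ` {..K}" by (intro image_mono) auto
  thus "fwd c T0 m \<in> T0 ` {..K}" using fwd_in[of c T0 m] by blast
qed


lemma flow_nat: "\<exists>n::nat. flow Dem d r T e = real n"
  unfolding flow_def by (rule exI[of _ "\<Sum>v\<in>Dem. if (\<exists>ps. is_path T v r ps \<and> e \<in> walk_edges ps) then d v else 0"]) (simp add: of_nat_sum if_distrib cong: if_cong)

lemma flow_nonneg: "0 \<le> flow Dem d r T e"
  using flow_nat[of Dem d r T e] by auto

lemma costA_eq: "costA Dem d r l eps i S = fA l (flow Dem d r S) (Mof eps i) S"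
  unfolding costA_def tcost_def scost_def Acost_def fA_def by simp
lemma rent_eq: "rent Dem d r l M S = rA l (flow Dem d r S) M S"
  unfolding rent_def rA_def Acost_def by simp
lemma buy_eq: "buy Dem d r l M S = bA l (flow Dem d r S) M S"
  unfolding buy_def bA_def by simp

lemma rt_facts: "routing_tree E r Dem S \<Longrightarrow> finite S \<and> S \<subseteq> E"
  unfolding routing_tree_def is_tree_def by auto

lemma Mof_pos: "0 < eps \<Longrightarrow> 0 < Mof eps i"
  unfolding Mof_def by simp
lemma Mof_mono: "0 < eps \<Longrightarrow> i \<le> j \<Longrightarrow> Mof eps i \<le> Mof eps j"
  unfolding Mof_def by (rule power_increasing) auto
lemma Mof_Suc: "0 < eps \<Longrightarrow> Mof eps i < Mof eps (Suc i)"
  unfolding Mof_def using Mof_pos[of eps i] unfolding Mof_def by (simp add: algebra_simps)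

lemma chain_dec: assumes "\<And>i. i < K \<Longrightarrow> f (Suc i) \<le> (f i :: real)"
  shows "j \<le> i \<Longrightarrow> i \<le> K \<Longrightarrow> f i \<le> f j"
proof (induction i)
  case 0 thus ?case by simp
next
  case (Suc i)
  show ?case
  proof (cases "j = Suc i")
    case True thus ?thesis by simp
  next
    case False
    hence "f i \<le> f j" using Suc by auto
    moreover have "f (Suc i) \<le> f i" using assms Suc.prems by auto
    ultimately show ?thesis by linarith
  qed
qed

theorem corollary6:
  fixes V :: "'a set" and E :: "'a set set" and l :: "'a set \<Rightarrow> real" and r :: 'a
    and Dem :: "'a set" and d :: "'a \<Rightarrow> nat"
    and eps gamma delta :: real
    and T0 Tstar :: "nat \<Rightarrow> 'a set set" and T :: "'a set set"
    and cB cR muR muB nuR nuB :: real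
  assumes "finite V" and "E \<subseteq> {{u, v} | u v. u \<in> V \<and> v \<in> V \<and> u \<noteq> v}"
    and "\<forall>e\<in>E. 0 \<le> l e" and "r \<in> V" and "Dem \<subseteq> V" and "Dem \<noteq> {}"
    and "\<forall>v\<in>Dem. 0 < d v"
    and "0 < eps" and "1 < gamma" and "1 < delta"
  defines "K \<equiv> Kof Dem d eps"
    and "R \<equiv> (\<lambda>i. rent Dem d r l (Mof eps i) (proc_trees Dem d r l eps T0 i))"
    and "B \<equiv> (\<lambda>i. buy Dem d r l (Mof eps i) (proc_trees Dem d r l eps T0 i))"
    and "Rs \<equiv> (\<lambda>i. rent Dem d r l (Mof eps i) (Tstar i))"
    and "Bs \<equiv> (\<lambda>i. buy Dem d r l (Mof eps i) (Tstar i))"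
    and "LB \<equiv> LB_set (\<lambda>i. buy Dem d r l (Mof eps i) (proc_trees Dem d r l eps T0 i))
                      gamma (Kof Dem d eps)"
  assumes "\<forall>i\<le>K. routing_tree E r Dem (Tstar i) \<and>
              (\<forall>S. routing_tree E r Dem S \<longrightarrow> costA Dem d r l eps i (Tstar i) \<le> costA Dem d r l eps i S)"
    and "\<forall>i\<le>K. routing_tree E r Dem (T0 i)"
    and "routing_tree E r Dem T"
    and "0 \<le> cB" and "0 \<le> cR"
    and "\<forall>i\<in>L_set LB R delta K. \<exists>TB TR. TB \<union> TR = T \<and> TB \<inter> TR = {} \<and>
            scost Dem d r l (Acost (Mof eps 0)) T TB \<le> cB * B i \<and>
            scost Dem d r l (Acost (Mof eps K)) T TR \<le> cR * R i"
    and "\<forall>i\<le>K. R i \<le> muR * Rs i + muB * Mof eps i * Bs i \<and>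
              Mof eps i * B i \<le> nuR * Rs i + nuB * Mof eps i * Bs i"
  shows "\<forall>k\<le>K. costA Dem d r l eps k T \<le> max (cR * delta * muR + cB * gamma * nuR)
                                (cR * delta * muB + cB * gamma * nuB) * costA Dem d r l eps k (Tstar k)"
  proof (intro allI impI)
  fix k assume kK: "k \<le> K"
  define c where "c = costA Dem d r l eps"
  define P where "P = proc_trees Dem d r l eps T0"
  have P_eq: "P i = final_trees c T0 K i" for i
    unfolding P_def proc_trees_def c_def K_def by simp
  have lnn: "\<forall>e\<in>E. 0 \<le> l e" using assms(3) .
  have eps: "0 < eps" using assms(8) .
  have Pfin: "finite (P i)" and PE: "\<forall>e\<in>P i. 0 \<le> l e" for i
  proof -
    have "P i \<in> T0 ` {..K}" using final_in[of c T0 K i] unfolding P_eq .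
    then obtain m where "m \<le> K" "P i = T0 m" by blast
    hence "finite (P i) \<and> P i \<subseteq> E" using rt_facts assms(18) by metis
    thus "finite (P i)" "\<forall>e\<in>P i. 0 \<le> l e" using lnn by auto
  qed
  have Rr: "R i = rA l (flow Dem d r (P i)) (Mof eps i) (P i)" for i
    unfolding R_def P_def rent_eq ..
  have Bb: "B i = bA l (flow Dem d r (P i)) (Mof eps i) (P i)" for i
    unfolding B_def P_def buy_eq ..
  have Rnn: "0 \<le> R i" for i unfolding Rr
    by (rule rA_nonneg) (use PE flow_nonneg Mof_pos[OF eps] in \<open>auto intro: less_imp_le\<close>)
  have Bnn: "0 \<le> B i" for i unfolding Bb by (rule bA_nonneg) (rule PE)
  have pair: "B (Suc i) \<le> B i \<and> R i \<le> R (Suc i)" if "i < K" for i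
  proof -
    have fp: "c i (P i) \<le> c i (P (Suc i)) \<and> c (Suc i) (P (Suc i)) \<le> c (Suc i) (P i)"
      unfolding P_eq using final_pair[OF that] .
    show ?thesis unfolding Rr Bb
      by (rule exch[OF Pfin Pfin PE PE less_imp_le[OF Mof_pos[OF eps]] Mof_Suc[OF eps]])
         (use fp in \<open>simp_all add: c_def costA_eq\<close>)
  qed
  have Bmono: "B i \<le> B j" if "j \<le> i" "i \<le> K" for i j
    using chain_dec[of K B j i] pair that by auto
  have Rmono: "R j \<le> R i" if "j \<le> i" "i \<le> K" for i j
    using chain_dec[of K "\<lambda>i. - R i" j i] pair that by auto
  have LBeq: "LB = LB_set B gamma K" unfolding LB_def B_def K_def ..
  obtain j where j: "j \<in> LB" "j \<le> k" "j = k \<or> B j \<le> gamma * B k"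
    using lb_main[of gamma k "Suc K" B] assms(9) kK unfolding LBeq LB_set_def by auto
  have BjBk: "B j \<le> gamma * B k"
    using j(3) Bnn[of k] assms(9) by (auto intro: order_trans[OF _ mult_right_mono[of 1 gamma]])
  have jK: "j \<le> K" using j(2) kK by simp
  have ex: "\<exists>i\<in>L_set LB R delta K. j \<le> i \<and> i \<le> K \<and> (i = j \<or> R i \<le> delta * R j)"
    unfolding L_set_def by (rule l_main[OF _ j(1) jK]) (use assms(10) in simp_all)
  then obtain i where i: "i \<in> L_set LB R delta K" "j \<le> i" "i \<le> K" "i = j \<or> R i \<le> delta * R j"
    by blast
  have RjRk: "R j \<le> R k" using Rmono j(2) kK by auto
  have Ri: "R i \<le> delta * R k"
  proof -
    have "R j \<le> delta * R j" using Rnn[of j] assms(10) mult_right_mono[of 1 delta "R j"] by auto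
    hence "R i \<le> delta * R j" using i(4) by auto
    also have "\<dots> \<le> delta * R k" using RjRk assms(10) by auto
    finally show ?thesis .
  qed
  have Bi: "B i \<le> gamma * B k" using order_trans[OF Bmono[OF i(2,3)] BjBk] .
  obtain TB TR where part: "TB \<union> TR = T" "TB \<inter> TR = {}"
    "scost Dem d r l (Acost (Mof eps 0)) T TB \<le> cB * B i"
    "scost Dem d r l (Acost (Mof eps K)) T TR \<le> cR * R i"
    using bspec[OF assms(22) i(1)] by (elim exE conjE) blast
  have Tfin: "finite T" and TE: "\<forall>e\<in>T. 0 \<le> l e" using rt_facts[OF assms(19)] lnn by auto
  have fTB: "finite TB" "finite TR" using Tfin part(1) by (auto intro: finite_subset)
  define Mk where "Mk = Mof eps k"
  have Mk: "0 < Mk" unfolding Mk_def using Mof_pos[OF eps] .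
  have M0: "Mof eps 0 = 1" unfolding Mof_def by simp
  have MkK: "Mk \<le> Mof eps K" unfolding Mk_def using Mof_mono[OF eps kK] .
  have split: "costA Dem d r l eps k T = scost Dem d r l (Acost Mk) T TB + scost Dem d r l (Acost Mk) T TR"
    unfolding costA_def tcost_def scost_def Mk_def
    using sum.union_disjoint[OF fTB part(2), of "\<lambda>e. l e * Acost (Mof eps k) (flow Dem d r T e)"] part(1) by simp
  have sTB: "scost Dem d r l (Acost Mk) T TB \<le> Mk * scost Dem d r l (Acost (Mof eps 0)) T TB"
    unfolding scost_def sum_distrib_left M0
  proof (rule sum_mono)
    fix e assume "e \<in> TB" hence le: "0 \<le> l e" using TE part(1) by auto
    obtain n where n: "flow Dem d r T e = real n" using flow_nat[of Dem d r T e] by (elim exE)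
    have "Acost Mk (real n) \<le> Mk * Acost 1 (real n)"
      unfolding Acost_def using Mk by (cases n) auto
    hence "l e * Acost Mk (real n) \<le> l e * (Mk * Acost 1 (real n))" using le by (rule mult_left_mono)
    thus "l e * Acost Mk (flow Dem d r T e) \<le> Mk * (l e * Acost 1 (flow Dem d r T e))" using n by (simp add: algebra_simps)
  qed
  have sTR: "scost Dem d r l (Acost Mk) T TR \<le> scost Dem d r l (Acost (Mof eps K)) T TR"
    unfolding scost_def
  proof (rule sum_mono)
    fix e assume "e \<in> TR" hence le: "0 \<le> l e" using TE part(1) by auto
    have "Acost Mk (flow Dem d r T e) \<le> Acost (Mof eps K) (flow Dem d r T e)"
      unfolding Acost_def using MkK by auto
    thus "l e * Acost Mk (flow Dem d r T e) \<le> l e * Acost (Mof eps K) (flow Dem d r T e)" using le by (rule mult_left_mono)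
  qed
  have step1: "costA Dem d r l eps k T \<le> Mk * (cB * B i) + cR * R i"
    using split sTB sTR part(3,4) mult_left_mono[OF part(3) less_imp_le[OF Mk]] by linarith
  have "Mk * (cB * B i) \<le> Mk * (cB * (gamma * B k))"
    using Bi assms(20) Mk by (simp add: mult_left_mono)
  moreover have "cR * R i \<le> cR * (delta * R k)" using Ri assms(21) by (simp add: mult_left_mono)
  ultimately have step2: "costA Dem d r l eps k T \<le> cB * gamma * (Mk * B k) + cR * delta * R k"
    using step1 by (simp add: algebra_simps)
  have mn: "R k \<le> muR * Rs k + muB * Mk * Bs k" "Mk * B k \<le> nuR * Rs k + nuB * Mk * Bs k"
    using assms(23) kK unfolding Mk_def by auto
  have cg: "0 \<le> cB * gamma" "0 \<le> cR * delta" using assms(9,10,20,21) by auto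
  have step3: "costA Dem d r l eps k T \<le> cB * gamma * (nuR * Rs k + nuB * Mk * Bs k) + cR * delta * (muR * Rs k + muB * Mk * Bs k)"
    using step2 mult_left_mono[OF mn(2) cg(1)] mult_left_mono[OF mn(1) cg(2)] by linarith
  have "routing_tree E r Dem (Tstar k)" using assms(17) kK by simp
  hence "finite (Tstar k) \<and> Tstar k \<subseteq> E" by (rule rt_facts)
  hence Tsk: "finite (Tstar k)" "\<forall>e\<in>Tstar k. 0 \<le> l e" using lnn by auto
  have Rsnn: "0 \<le> Rs k" unfolding Rs_def rent_eq
    by (rule rA_nonneg) (use Tsk flow_nonneg Mof_pos[OF eps] in \<open>auto intro: less_imp_le\<close>)
  have Bsnn: "0 \<le> Mk * Bs k" unfolding Bs_def buy_eq using bA_nonneg[OF Tsk(2)] Mk by simp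
  have cs: "costA Dem d r l eps k (Tstar k) = Rs k + Mk * Bs k"
    unfolding costA_eq Rs_def Bs_def rent_eq buy_eq Mk_def using F1[OF Tsk(1)] by simp
  define a where "a = cR * delta * muR + cB * gamma * nuR"
  define b where "b = cR * delta * muB + cB * gamma * nuB"
  have "cB * gamma * (nuR * Rs k + nuB * Mk * Bs k) + cR * delta * (muR * Rs k + muB * Mk * Bs k)
        = a * Rs k + b * (Mk * Bs k)" unfolding a_def b_def by (simp add: algebra_simps)
  also have "\<dots> \<le> max a b * Rs k + max a b * (Mk * Bs k)"
    using mult_right_mono[OF max.cobounded1[of a b] Rsnn] mult_right_mono[OF max.cobounded2[of b a] Bsnn] by linarith
  also have "\<dots> = max a b * costA Dem d r l eps k (Tstar k)" unfolding cs by (simp add: algebra_simps)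
  finally show "costA Dem d r l eps k T \<le> max (cR * delta * muR + cB * gamma * nuR)
                                (cR * delta * muB + cB * gamma * nuB) * costA Dem d r l eps k (Tstar k)"
    using step3 unfolding a_def b_def by linarith
qed

end
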